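(* Let $\Gamma$ be a group. For every finite symmetric subset $S\subseteq\Gamma$ we have $N'(\mathbf{1}_S)=e(\Gamma,S)\,|S|$.
   Context: For $f\colon\Gamma\to\mathbf{C}$, $N'(f)=\sup_F\frac1{|F|}\sum_{a,b\in F}|f(a^{-1}b)|$, the supremum over all non-empty finite $F\subseteq\Gamma$. $\mathrm{Cay}(\Gamma,S)$ is the graph with vertex set $\Gamma$ and an edge between $g$ and $gs$ for each $s\in S$; $\partial_SF$ is the set of edges joining a finite set $F$ to its complement; $h(\Gamma,S)=\inf_F|\partial_SF|/|F|$ over non-empty finite $F$; $e(\Gamma,S)=1-h(\Gamma,S)/|S|$. *)

theory Defs
  imports "HOL-Analysis.Analysis"
begin

text \<open>The group Gamma is an arbitrary (not necessarily abelian) group, rendered as a type of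
  class group_add; the group product a b is written a + b and a^-1 is written - a.\<close>

definition Nprime :: "('a::group_add \<Rightarrow> complex) \<Rightarrow> ereal" where
  "Nprime f = (SUP F \<in> {F. finite F \<and> F \<noteq> {}}.
      ereal ((1 / real (card F)) * (\<Sum>a\<in>F. \<Sum>b\<in>F. cmod (f (- a + b)))))"

definition cay_boundary :: "'a::group_add set \<Rightarrow> 'a set \<Rightarrow> 'a set set" where
  "cay_boundary S F = {{g, g + s} | g s. s \<in> S \<and>
      ((g \<in> F \<and> g + s \<notin> F) \<or> (g \<notin> F \<and> g + s \<in> F))}"

definition cheeger :: "'a::group_add set \<Rightarrow> real" where
  "cheeger S = (INF F \<in> {F. finite F \<and> F \<noteq> {}}. real (card (cay_boundary S F)) / real (card F))"

definition expansion :: "'a::group_add set \<Rightarrow> real" where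
  "expansion S = 1 - cheeger S / real (card S)"

definition symmetric_set :: "'a::group_add set \<Rightarrow> bool" where
  "symmetric_set S \<longleftrightarrow> (\<forall>s\<in>S. - s \<in> S)"

end

theory Submission
  imports Defs
begin

lemma bnd_card:
  fixes S F :: "'a::group_add set"
  assumes S: "finite S" "symmetric_set S" and F: "finite F"
  shows "card (cay_boundary S F) = (\<Sum>a\<in>F. card {s\<in>S. a + s \<notin> F})"
proof -
  have eq: "cay_boundary S F = (\<lambda>(a,s). {a, a+s}) ` (SIGMA a:F. {s\<in>S. a + s \<notin> F})"
  proof (rule set_eqI, rule iffI)
    fix e assume "e \<in> cay_boundary S F"
    then obtain g s where e: "e = {g, g+s}" "s \<in> S"
      "(g \<in> F \<and> g + s \<notin> F) \<or> (g \<notin> F \<and> g + s \<in> F)"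
      unfolding cay_boundary_def by blast
    show "e \<in> (\<lambda>(a,s). {a, a+s}) ` (SIGMA a:F. {s\<in>S. a + s \<notin> F})"
    proof (cases "g \<in> F")
      case True then show ?thesis using e by force
    next
      case False
      have "-s \<in> S" using S(2) e(2) unfolding symmetric_set_def by blast
      moreover have "g + s + - s = g" by (simp add: add.assoc)
      moreover have "e = {g+s, g+s+ -s}" using e(1) by (simp add: add.assoc insert_commute)
      ultimately show ?thesis using e False
        by (intro image_eqI[where x="(g+s, -s)"]) auto
    qed
  next
    fix e assume "e \<in> (\<lambda>(a,s). {a, a+s}) ` (SIGMA a:F. {s\<in>S. a + s \<notin> F})"
    then obtain a s where "a \<in> F" "s \<in> S" "a + s \<notin> F" "e = {a, a+s}" by auto
    then show "e \<in> cay_boundary S F" unfolding cay_boundary_def by blast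
  qed
  have inj: "inj_on (\<lambda>(a,s). {a, a+s}) (SIGMA a:F. {s\<in>S. a + s \<notin> F})"
  proof (rule inj_onI, clarsimp)
    fix a s a' s'
    assume h: "a \<in> F" "s \<in> S" "a + s \<notin> F" "a' \<in> F" "s' \<in> S" "a' + s' \<notin> F"
      "{a, a + s} = {a', a' + s'}"
    then have "a = a'" by (metis doubleton_eq_iff)
    with h show "a = a' \<and> s = s'" by (metis doubleton_eq_iff add_left_cancel)
  qed
  show ?thesis unfolding eq using card_image[OF inj] F S by simp
qed

lemma sum_card:
  fixes S F :: "'a::group_add set"
  assumes S: "finite S" and F: "finite F"
  shows "(\<Sum>a\<in>F. \<Sum>b\<in>F. cmod (indicator S (- a + b) :: complex)) = (\<Sum>a\<in>F. real (card {s\<in>S. a + s \<in> F}))"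
proof (rule sum.cong[OF refl])
  fix a assume "a \<in> F"
  have "(\<Sum>b\<in>F. cmod (indicator S (- a + b) :: complex)) = (\<Sum>b\<in>F. indicator S (- a + b))"
    by (rule sum.cong) (auto simp: indicator_def)
  also have "\<dots> = real (card {b\<in>F. - a + b \<in> S})"
    using F by (simp add: indicator_def sum.If_cases) (simp add: Int_def)
  also have "{b\<in>F. - a + b \<in> S} = (\<lambda>s. a + s) ` {s\<in>S. a + s \<in> F}"
    by (auto simp: image_iff add.assoc[symmetric] intro!: exI[where x="- a + _"])
  also have "card \<dots> = card {s\<in>S. a + s \<in> F}"
    by (rule card_image) (auto simp: inj_on_def)
  finally show "(\<Sum>b\<in>F. cmod (indicator S (- a + b) :: complex)) = real (card {s\<in>S. a + s \<in> F})" .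
qed

lemma value_eq:
  fixes S F :: "'a::group_add set"
  assumes S: "finite S" "symmetric_set S" and F: "finite F" "F \<noteq> {}"
  shows "(1 / real (card F)) * (\<Sum>a\<in>F. \<Sum>b\<in>F. cmod (indicator S (- a + b) :: complex))
     = real (card S) - real (card (cay_boundary S F)) / real (card F)"
proof -
  have c: "\<And>a. real (card {s\<in>S. a + s \<in> F}) + real (card {s\<in>S. a + s \<notin> F}) = real (card S)"
  proof -
    fix a
    have "card {s\<in>S. a + s \<in> F} + card {s\<in>S. a + s \<notin> F} = card S"
      using S(1) by (subst card_Un_disjoint[symmetric]) (auto intro: arg_cong[where f=card])
    then show "real (card {s\<in>S. a + s \<in> F}) + real (card {s\<in>S. a + s \<notin> F}) = real (card S)"
      by (metis of_nat_add)
  qed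
  have "(\<Sum>a\<in>F. real (card {s\<in>S. a + s \<in> F})) + real (card (cay_boundary S F)) = real (card F) * real (card S)"
    using bnd_card[OF S F(1)] by (simp add: sum.distrib[symmetric] c)
  moreover have "real (card F) > 0" using F by auto
  ultimately show ?thesis using sum_card[OF S(1) F(1)]
    by (simp add: field_simps)
qed

theorem proposition4p2:
  fixes S :: "'a::group_add set"
  assumes "finite S" and "symmetric_set S"
  shows "Nprime (indicator S :: 'a \<Rightarrow> complex) = ereal (expansion S * real (card S))"
proof -
  define A where "A = {F::'a set. finite F \<and> F \<noteq> {}}"
  define x where "x F = real (card (cay_boundary S F)) / real (card F)" for F :: "'a set"
  define c where "c = real (card S)"
  have A: "A \<noteq> {}" unfolding A_def by (auto intro!: exI[where x="{0}"])
  have x0: "\<And>F. x F \<ge> 0" unfolding x_def by simp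
  have xc: "\<And>F. F \<in> A \<Longrightarrow> x F \<le> c"
  proof -
    fix F assume "F \<in> A"
    then have F: "finite F" "F \<noteq> {}" by (auto simp: A_def)
    have "0 \<le> (1 / real (card F)) * (\<Sum>a\<in>F. \<Sum>b\<in>F. cmod (indicator S (- a + b) :: complex))"
      by (intro mult_nonneg_nonneg sum_nonneg) auto
    then show "x F \<le> c" using value_eq[OF assms F] unfolding x_def c_def by simp
  qed
  have bdd: "bdd_below (x ` A)" using x0 by (auto intro!: bdd_belowI)
  have N: "Nprime (indicator S :: 'a \<Rightarrow> complex) = (SUP F\<in>A. ereal (c - x F))"
    unfolding Nprime_def A_def[symmetric]
  proof (rule SUP_cong[OF refl])
    fix F assume "F \<in> A"
    then have F: "finite F" "F \<noteq> {}" by (auto simp: A_def)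
    show "ereal ((1 / real (card F)) * (\<Sum>a\<in>F. \<Sum>b\<in>F. cmod (indicator S (- a + b) :: complex))) = ereal (c - x F)"
      using value_eq[OF assms F] by (simp add: x_def c_def)
  qed
  have "(SUP F\<in>A. ereal (c - x F)) = ereal (SUP F\<in>A. c - x F)"
  proof (rule ereal_SUP[symmetric])
    show "\<bar>SUP F\<in>A. ereal (c - x F)\<bar> \<noteq> \<infinity>"
      by (rule ereal_SUP_not_infty[where l=0 and u="ereal c"]) (use A xc x0 in \<open>auto simp: c_def\<close>)
  qed
  also have "(SUP F\<in>A. c - x F) = c - (INF F\<in>A. x F)"
  proof (rule antisym)
    show "(SUP F\<in>A. c - x F) \<le> c - (INF F\<in>A. x F)"
      by (rule cSUP_least[OF A]) (use cINF_lower[OF bdd] in auto)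
    have bdda: "bdd_above ((\<lambda>F. c - x F) ` A)" using x0 by (auto intro!: bdd_aboveI[where M=c])
    have "c - (SUP F\<in>A. c - x F) \<le> (INF F\<in>A. x F)"
      by (rule cINF_greatest[OF A]) (use cSUP_upper[OF _ bdda] in force)
    then show "c - (INF F\<in>A. x F) \<le> (SUP F\<in>A. c - x F)" by simp
  qed
  also have "c - (INF F\<in>A. x F) = expansion S * real (card S)"
  proof (cases "card S = 0")
    case True
    then have "x F = 0" if "F \<in> A" for F using xc[OF that] x0[of F] by (simp add: c_def)
    then have "(INF F\<in>A. x F) = 0" using A by (simp add: cINF_const cong: INF_cong)
    then show ?thesis using True by (simp add: c_def)
  next
    case False
    then show ?thesis unfolding expansion_def cheeger_def c_def x_def A_def
      by (simp add: field_simps)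
  qed
  finally show ?thesis using N by simp
qed

end
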